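(* Let $n\geq5$ and let $U,V$ be monomials. Then $U,V\in F(J(P_{n-3})^2)$ if and only if both $x_n^2x_{n-2}^2U$ and $x_n^2x_{n-2}^2V$ belong to $F(J(P_n)^2)$. Moreover, in that case $U>_{\mathcal R}V$ (rooted order on $F(J(P_{n-3})^2)$) if and only if $x_n^2x_{n-2}^2U>_{\mathcal R}x_n^2x_{n-2}^2V$ (rooted order on $F(J(P_n)^2)$).
   Context: Let $K$ be a field. For $m\geq 1$, $P_m$ is the path graph on vertices $x_1,\ldots,x_m$ with edges $\{x_i,x_{i+1}\}$. The cover ideal $J(P_m)$ is generated by the monomials $\prod_{x\in C}x$ with $C$ a minimal vertex cover of $P_m$. For a monomial ideal $I$, $G(I)$ is its set of minimal monomial generators and $F(I^2)=\{uv:u,v\in G(I)\}$. The rooted list $\mathcal R(P_m)$ is defined recursively: $\mathcal R(P_1)$ empty; $\mathcal R(P_2)=x_1,x_2$; $\mathcal R(P_3)=x_2,x_1x_3$; $\mathcal R(P_4)=x_1x_3,x_2x_3,x_2x_4$; for $m\geq5$, if $\mathcal R(P_{m-2})=u_1,\ldots,u_r$ and $\mathcal R(P_{m-3})=v_1,\ldots,v_s$, then $\mathcal R(P_m)=x_{m-1}u_1,\ldots,x_{m-1}u_r,x_mx_{m-2}v_1,\ldots,x_mx_{m-2}v_s$; it lists each element of $G(J(P_m))$ once. With $\mathcal R(P_m)=u_1,\ldots,u_q$, each $M\in F(J(P_m)^2)$ can be written $u_1^{a_1}\cdots u_q^{a_q}$ with $a_i\geq0$, $\sum a_i=2$; the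 maximal expression of $M$ is the one with lexicographically largest exponent vector. The rooted order on $F(J(P_m)^2)$: $M>_{\mathcal R}N$ iff the exponent vector of the maximal expression of $M$ is lexicographically larger than that of $N$. *)

theory Defs
  imports "HOL-Library.Multiset"
begin

text \<open>Monomials in the variables x_1, x_2, ... are represented by multisets of
  variable indices (x_i is represented by i); multiplication is multiset sum.\<close>

type_synonym monomial = "nat multiset"

definition is_vertex_cover_path :: "nat \<Rightarrow> nat set \<Rightarrow> bool" where
  "is_vertex_cover_path m C \<longleftrightarrow>
     C \<subseteq> {1..m} \<and> (\<forall>i. 1 \<le> i \<and> i < m \<longrightarrow> i \<in> C \<or> Suc i \<in> C)"

definition is_min_vertex_cover_path :: "nat \<Rightarrow> nat set \<Rightarrow> bool" where
  "is_min_vertex_cover_path m C \<longleftrightarrow>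
     is_vertex_cover_path m C \<and> (\<forall>D. D \<subset> C \<longrightarrow> \<not> is_vertex_cover_path m D)"

text \<open>G(J(P_m)): minimal generators of the cover ideal.\<close>
definition G_cover :: "nat \<Rightarrow> monomial set" where
  "G_cover m = {mset_set C | C. is_min_vertex_cover_path m C}"

definition F_sq :: "nat \<Rightarrow> monomial set" where
  "F_sq m = {u + v | u v. u \<in> G_cover m \<and> v \<in> G_cover m}"

fun rooted :: "nat \<Rightarrow> monomial list" where
  "rooted 0 = []"
| "rooted (Suc 0) = []"
| "rooted (Suc (Suc 0)) = [{#1#}, {#2#}]"
| "rooted (Suc (Suc (Suc 0))) = [{#2#}, {#1, 3#}]"
| "rooted (Suc (Suc (Suc (Suc 0)))) = [{#1, 3#}, {#2, 3#}, {#2, 4#}]"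
| "rooted (Suc (Suc (Suc (Suc (Suc k))))) =
     map (\<lambda>u. {#k + 4#} + u) (rooted (Suc (Suc (Suc k)))) @
     map (\<lambda>v. {#k + 5, k + 3#} + v) (rooted (Suc (Suc k)))"

definition expressions :: "nat \<Rightarrow> monomial \<Rightarrow> nat list set" where
  "expressions m M = {a. length a = length (rooted m) \<and> sum_list a = 2 \<and>
      (\<Sum>i<length (rooted m). repeat_mset (a ! i) (rooted m ! i)) = M}"

definition lex_less :: "nat list \<Rightarrow> nat list \<Rightarrow> bool" where
  "lex_less a b \<longleftrightarrow> (a, b) \<in> lexord {(x, y). x < y}"

definition max_expr :: "nat \<Rightarrow> monomial \<Rightarrow> nat list" where
  "max_expr m M = (THE a. a \<in> expressions m M \<and>
      (\<forall>b \<in> expressions m M. b = a \<or> lex_less b a))"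

definition rooted_gt :: "nat \<Rightarrow> monomial \<Rightarrow> monomial \<Rightarrow> bool" where
  "rooted_gt m M N \<longleftrightarrow> M \<in> F_sq m \<and> N \<in> F_sq m \<and>
      lex_less (max_expr m N) (max_expr m M)"

end

theory Submission imports Defs begin

lemma lex_less_iff: "lex_less a b \<longleftrightarrow> ord_class.lexordp a b"
  by (simp add: lex_less_def lexordp_conv_lexord)

lemma lex_pref: "lex_less (xs @ a) (xs @ b) \<longleftrightarrow> lex_less a b"
  unfolding lex_less_def by (simp add: irrefl_def)

lemma max_ex: "finite E \<Longrightarrow> E \<noteq> {} \<Longrightarrow> \<exists>a. a \<in> E \<and> (\<forall>b\<in>E. b = a \<or> lex_less b a)"
proof (induction E rule: finite_ne_induct)
  case (singleton x) then show ?case by auto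
next
  case (insert x F)
  then obtain a where a: "a \<in> F" "\<forall>b\<in>F. b = a \<or> lex_less b a" by blast
  show ?case
  proof (cases "lex_less x a \<or> x = a")
    case True then show ?thesis using a by auto
  next
    case False
    then have "lex_less a x" using lexordp_linear[of a x] by (auto simp: lex_less_iff)
    then have "\<forall>b\<in>insert x F. b = x \<or> lex_less b x" using a
      by (auto simp: lex_less_iff intro: lexordp_trans)
    then show ?thesis by blast
  qed
qed

lemma max_uniq: "(\<exists>a. a \<in> E \<and> (\<forall>b\<in>E. b = a \<or> lex_less b a)) \<Longrightarrow>
   \<exists>!a. a \<in> E \<and> (\<forall>b\<in>E. b = a \<or> lex_less b a)"
  by (metis lex_less_iff lexordp_irreflexive' lexordp_trans)

lemma expr_finite: "finite (expressions m M)"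
proof -
  have "expressions m M \<subseteq> {a. set a \<subseteq> {0..2} \<and> length a = length (rooted m)}"
    unfolding expressions_def using member_le_sum_list by fastforce
  moreover have "finite {a. set a \<subseteq> {0..(2::nat)} \<and> length a = length (rooted m)}"
    by (rule finite_lists_length_eq) auto
  ultimately show ?thesis by (rule finite_subset)
qed

definition ev :: "monomial list \<Rightarrow> nat list \<Rightarrow> monomial" where
  "ev R a = sum_list (map (\<lambda>(c,u). repeat_mset c u) (zip a R))"

lemma ev_sum: "length a = length R \<Longrightarrow>
  (\<Sum>i<length R. repeat_mset (a ! i) (R ! i)) = ev R a"
  unfolding ev_def by (simp add: sum_list_sum_nth atLeast0LessThan)

lemma expressions_ev: "expressions m M = {a. length a = length (rooted m) \<and> sum_list a = 2 \<and> ev (rooted m) a = M}"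
  unfolding expressions_def using ev_sum by auto

lemma ev_map: "length a = length R \<Longrightarrow> ev (map (\<lambda>u. C + u) R) a = repeat_mset (sum_list a) C + ev R a"
proof (induction a R rule: list_induct2)
  case Nil then show ?case by (simp add: ev_def)
next
  case (Cons x xs y ys) then show ?case by (simp add: ev_def repeat_mset_distrib)
qed

lemma ev_append: "length a1 = length R1 \<Longrightarrow> ev (R1 @ R2) (a1 @ a2) = ev R1 a1 + ev R2 a2"
  by (simp add: ev_def)

lemma ev_zero: "ev R (replicate r 0) = {#}"
  unfolding ev_def by (induction r arbitrary: R) (auto simp: zip_Cons1 split: list.splits)

lemma vc_finite: "is_vertex_cover_path m C \<Longrightarrow> finite C"
  unfolding is_vertex_cover_path_def using finite_subset by blast

lemma mvc_small: "m \<le> 1 \<Longrightarrow> is_min_vertex_cover_path m C \<Longrightarrow> C = {}"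
  unfolding is_min_vertex_cover_path_def is_vertex_cover_path_def by auto

lemma drop1:
  assumes "is_min_vertex_cover_path (j+2) C" "j+1 \<in> C"
  shows "j+2 \<notin> C \<and> is_min_vertex_cover_path j (C - {j+1})"
proof -
  have vc: "C \<subseteq> {1..j+2}" "\<And>i. 1 \<le> i \<Longrightarrow> i < j+2 \<Longrightarrow> i \<in> C \<or> Suc i \<in> C"
    and mn: "\<And>D. D \<subset> C \<Longrightarrow> \<not> is_vertex_cover_path (j+2) D"
    using assms(1) unfolding is_min_vertex_cover_path_def is_vertex_cover_path_def by auto
  have n2: "j+2 \<notin> C"
  proof
    assume h: "j+2 \<in> C"
    have "is_vertex_cover_path (j+2) (C - {j+2})"
      unfolding is_vertex_cover_path_def
    proof (intro conjI allI impI)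
      show "C - {j+2} \<subseteq> {1..j+2}" using vc by auto
      fix i assume i: "1 \<le> i \<and> i < j+2"
      show "i \<in> C - {j+2} \<or> Suc i \<in> C - {j+2}"
      proof (cases "i = j+1")
        case True then show ?thesis using assms(2) by auto
      next
        case False then show ?thesis using vc(2)[of i] i by auto
      qed
    qed
    then show False using mn h by blast
  qed
  have "is_vertex_cover_path j (C - {j+1})"
    unfolding is_vertex_cover_path_def
  proof (intro conjI allI impI)
    show "C - {j+1} \<subseteq> {1..j}" using vc n2 by (auto simp: subset_iff) (metis Suc_eq_plus1 add_2_eq_Suc' atLeastAtMost_iff le_Suc_eq)
    fix i assume i: "1 \<le> i \<and> i < j"
    then show "i \<in> C - {j+1} \<or> Suc i \<in> C - {j+1}" using vc(2)[of i] by auto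
  qed
  moreover have "\<not> is_vertex_cover_path j D" if "D \<subset> C - {j+1}" for D
  proof
    assume d: "is_vertex_cover_path j D"
    have "is_vertex_cover_path (j+2) (insert (j+1) D)"
      using d unfolding is_vertex_cover_path_def
    proof (intro conjI allI impI)
      show "insert (j+1) D \<subseteq> {1..j+2}" using d unfolding is_vertex_cover_path_def by auto
      fix i assume i: "1 \<le> i \<and> i < j+2"
      show "i \<in> insert (j+1) D \<or> Suc i \<in> insert (j+1) D"
      proof (cases "i < j")
        case True then show ?thesis using d i unfolding is_vertex_cover_path_def by auto
      next
        case False then have "i = j \<or> i = j+1" using i by auto
        then show ?thesis by auto
      qed
    qed
    moreover have "insert (j+1) D \<subset> C" using that assms(2) by auto
    ultimately show False using mn by blast
  qed
  ultimately show ?thesis using n2 unfolding is_min_vertex_cover_path_def by blast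
qed

lemma drop2:
  assumes "is_min_vertex_cover_path (j+3) C" "j+1 \<in> C" "j+3 \<in> C"
  shows "j+2 \<notin> C \<and> is_min_vertex_cover_path j (C - {j+1,j+3})"
proof -
  have vc: "C \<subseteq> {1..j+3}" "\<And>i. 1 \<le> i \<Longrightarrow> i < j+3 \<Longrightarrow> i \<in> C \<or> Suc i \<in> C"
    and mn: "\<And>D. D \<subset> C \<Longrightarrow> \<not> is_vertex_cover_path (j+3) D"
    using assms(1) unfolding is_min_vertex_cover_path_def is_vertex_cover_path_def by auto
  have n2: "j+2 \<notin> C"
  proof
    assume h: "j+2 \<in> C"
    have "is_vertex_cover_path (j+3) (C - {j+2})"
      unfolding is_vertex_cover_path_def
    proof (intro conjI allI impI)
      show "C - {j+2} \<subseteq> {1..j+3}" using vc by auto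
      fix i assume i: "1 \<le> i \<and> i < j+3"
      show "i \<in> C - {j+2} \<or> Suc i \<in> C - {j+2}"
      proof (cases "i = j+1 \<or> i = j+2")
        case True
        then show ?thesis
        proof
          assume "i = j+1" then show ?thesis using assms(2) by simp
        next
          assume "i = j+2" then have "Suc i = j+3" by simp
          then have "Suc i \<in> C" using assms(3) by metis
          moreover have "Suc i \<noteq> j+2" using \<open>i = j+2\<close> by simp
          ultimately show ?thesis by blast
        qed
      next
        case False then show ?thesis using vc(2)[of i] i by auto
      qed
    qed
    then show False using mn h by blast
  qed
  have "is_vertex_cover_path j (C - {j+1,j+3})"
    unfolding is_vertex_cover_path_def
  proof (intro conjI allI impI)
    show "C - {j+1,j+3} \<subseteq> {1..j}"
    proof
      fix x assume "x \<in> C - {j+1,j+3}"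
      then have "x \<in> C" "x \<noteq> j+1" "x \<noteq> j+3" by auto
      moreover have "x \<noteq> j+2" using n2 \<open>x \<in> C\<close> by auto
      moreover have "1 \<le> x" "x \<le> j+3" using vc(1) \<open>x \<in> C\<close> by auto
      ultimately show "x \<in> {1..j}" by simp
    qed
    fix i assume i: "1 \<le> i \<and> i < j"
    then show "i \<in> C - {j+1,j+3} \<or> Suc i \<in> C - {j+1,j+3}" using vc(2)[of i] by auto
  qed
  moreover have "\<not> is_vertex_cover_path j D" if "D \<subset> C - {j+1,j+3}" for D
  proof
    assume d: "is_vertex_cover_path j D"
    have "is_vertex_cover_path (j+3) (insert (j+1) (insert (j+3) D))"
      unfolding is_vertex_cover_path_def
    proof (intro conjI allI impI)
      show "insert (j+1) (insert (j+3) D) \<subseteq> {1..j+3}" using d unfolding is_vertex_cover_path_def by auto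
      fix i assume i: "1 \<le> i \<and> i < j+3"
      show "i \<in> insert (j+1) (insert (j+3) D) \<or> Suc i \<in> insert (j+1) (insert (j+3) D)"
      proof (cases "i < j")
        case True then show ?thesis using d i unfolding is_vertex_cover_path_def by auto
      next
        case False then have "i = j \<or> i = j+1 \<or> i = j+2" using i by auto
        then show ?thesis by auto
      qed
    qed
    moreover have "insert (j+1) (insert (j+3) D) \<subset> C" using that assms(2,3) by auto
    ultimately show False using mn by blast
  qed
  ultimately show ?thesis using n2 unfolding is_min_vertex_cover_path_def by blast
qed

lemma add2:
  assumes "is_min_vertex_cover_path j C"
  shows "is_min_vertex_cover_path (j+3) (insert (j+1) (insert (j+3) C))"
proof -
  have vc: "C \<subseteq> {1..j}" "\<And>i. 1 \<le> i \<Longrightarrow> i < j \<Longrightarrow> i \<in> C \<or> Suc i \<in> C"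
    and mn: "\<And>D. D \<subset> C \<Longrightarrow> \<not> is_vertex_cover_path j D"
    using assms(1) unfolding is_min_vertex_cover_path_def is_vertex_cover_path_def by auto
  let ?C = "insert (j+1) (insert (j+3) C)"
  have "is_vertex_cover_path (j+3) ?C"
      unfolding is_vertex_cover_path_def
  proof (intro conjI allI impI)
    show "?C \<subseteq> {1..j+3}" using vc by auto
    fix i assume i: "1 \<le> i \<and> i < j+3"
    show "i \<in> ?C \<or> Suc i \<in> ?C"
    proof (cases "i < j")
      case True then show ?thesis using vc(2)[of i] i by auto
    next
      case False then have "i = j \<or> i = j+1 \<or> i = j+2" using i by auto
      then show ?thesis by auto
    qed
  qed
  moreover have "\<not> is_vertex_cover_path (j+3) D" if D: "D \<subset> ?C" for D
  proof
    assume d: "is_vertex_cover_path (j+3) D"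
    have dd: "\<And>i. 1 \<le> i \<Longrightarrow> i < j+3 \<Longrightarrow> i \<in> D \<or> Suc i \<in> D" using d
      unfolding is_vertex_cover_path_def by auto
    have "j+2 \<notin> ?C" using vc by auto
    then have "j+2 \<notin> D" using D by auto
    then have h3: "j+3 \<in> D" "j+1 \<in> D" using dd[of "j+2"] dd[of "j+1"] by (auto simp: eval_nat_numeral)
    have "D - {j+1,j+3} \<subset> C"
    proof -
      have "D - {j+1,j+3} \<subseteq> C" using D by auto
      moreover have "D - {j+1,j+3} \<noteq> C"
      proof
        assume "D - {j+1,j+3} = C"
        then have "D = ?C" using h3 by auto
        then show False using D by auto
      qed
      ultimately show ?thesis by auto
    qed
    moreover have "is_vertex_cover_path j (D - {j+1,j+3})"
      unfolding is_vertex_cover_path_def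
    proof (intro conjI allI impI)
      show "D - {j+1,j+3} \<subseteq> {1..j}" using D vc by auto
      fix i assume i: "1 \<le> i \<and> i < j"
      then show "i \<in> D - {j+1,j+3} \<or> Suc i \<in> D - {j+1,j+3}" using dd[of i] by auto
    qed
    ultimately show False using mn by blast
  qed
  ultimately show ?thesis unfolding is_min_vertex_cover_path_def by blast
qed

lemma rooted_step: "rooted (k+5) = map (\<lambda>u. {#k + 4#} + u) (rooted (k+3)) @
     map (\<lambda>v. {#k + 5, k + 3#} + v) (rooted (k+2))"
  by (simp add: eval_nat_numeral)

lemma not_mid:
  assumes "is_min_vertex_cover_path (j+2) C" "j+1 \<notin> C" "1 \<le> j"
  shows "j+2 \<in> C \<and> j \<in> C"
proof -
  have "\<And>i. 1 \<le> i \<Longrightarrow> i < j+2 \<Longrightarrow> i \<in> C \<or> Suc i \<in> C"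
    using assms(1) unfolding is_min_vertex_cover_path_def is_vertex_cover_path_def by auto
  from this[of "j+1"] this[of j] assms(2,3) show ?thesis by auto
qed

lemma mvc_fin: "is_min_vertex_cover_path m C \<Longrightarrow> finite C"
  unfolding is_min_vertex_cover_path_def using vc_finite by blast

lemma mvc_sub: "is_min_vertex_cover_path m C \<Longrightarrow> C \<subseteq> {1..m}"
  unfolding is_min_vertex_cover_path_def is_vertex_cover_path_def by blast

lemma mvc2: "is_min_vertex_cover_path 2 C \<Longrightarrow> C = {1} \<or> C = {2}"
proof -
  assume a: "is_min_vertex_cover_path 2 C"
  show ?thesis
  proof (cases "1 \<in> C")
    case True
    then have "is_min_vertex_cover_path 0 (C - {1})" using drop1[of 0 C] a by (simp add: numeral_2_eq_2)
    then have "C - {1} = {}" using mvc_small by blast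
    then have "C = {1}" using True by blast
    then show ?thesis by simp
  next
    case False
    have "\<And>i. 1 \<le> i \<Longrightarrow> i < 2 \<Longrightarrow> i \<in> C \<or> Suc i \<in> C"
      using a unfolding is_min_vertex_cover_path_def is_vertex_cover_path_def by auto
    from this[of 1] False have "2 \<in> C" by (simp add: numeral_2_eq_2)
    have "\<forall>x\<in>C. x = 2"
    proof
      fix x assume "x \<in> C"
      then have "1 \<le> x" "x \<le> 2" "x \<noteq> 1" using mvc_sub[OF a] False by auto
      then show "x = 2" by simp
    qed
    then have "C = {2}" using \<open>2 \<in> C\<close> by blast
    then show ?thesis by simp
  qed
qed

lemma mvc3: "is_min_vertex_cover_path 3 C \<Longrightarrow> C = {2} \<or> C = {1,3}"
proof -
  assume a: "is_min_vertex_cover_path 3 C"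
  show ?thesis
  proof (cases "2 \<in> C")
    case True
    then have "is_min_vertex_cover_path 1 (C - {2})" using drop1[of 1 C] a by (simp add: eval_nat_numeral)
    then have "C - {2} = {}" using mvc_small by blast
    then have "C = {2}" using True by blast
    then show ?thesis by simp
  next
    case False
    then have "3 \<in> C \<and> 1 \<in> C" using not_mid[of 1 C] a by (simp add: eval_nat_numeral)
    then have "is_min_vertex_cover_path 0 (C - {1,3})" using drop2[of 0 C] a by (simp add: eval_nat_numeral)
    then have "C - {1,3} = {}" using mvc_small by blast
    then have "C = {1,3}" using \<open>3 \<in> C \<and> 1 \<in> C\<close> by blast
    then show ?thesis by simp
  qed
qed

lemma mvc4: "is_min_vertex_cover_path 4 C \<Longrightarrow> C = {1,3} \<or> C = {2,3} \<or> C = {2,4}"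
proof -
  assume a: "is_min_vertex_cover_path 4 C"
  show ?thesis
  proof (cases "3 \<in> C")
    case True
    then have "is_min_vertex_cover_path 2 (C - {3})" using drop1[of 2 C] a by (simp add: eval_nat_numeral)
    then have "C - {3} = {1} \<or> C - {3} = {2}" using mvc2 by blast
    then have "C = {1,3} \<or> C = {2,3}" using True by blast
    then show ?thesis by blast
  next
    case False
    then have "4 \<in> C \<and> 2 \<in> C" using not_mid[of 2 C] a by (simp add: eval_nat_numeral)
    then have "is_min_vertex_cover_path 1 (C - {2,4})" using drop2[of 1 C] a by (simp add: eval_nat_numeral)
    then have "C - {2,4} = {}" using mvc_small by blast
    then have "C = {2,4}" using \<open>4 \<in> C \<and> 2 \<in> C\<close> by blast
    then show ?thesis by simp
  qed
qed

lemma mvc_rooted: "is_min_vertex_cover_path m C \<Longrightarrow> 2 \<le> m \<Longrightarrow> mset_set C \<in> set (rooted m)"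
proof (induction m arbitrary: C rule: less_induct)
  case (less m)
  have "m = 2 \<or> m = 3 \<or> m = 4 \<or> m = (m - 5) + 5" using less.prems(2) by arith
  then consider "m = 2" | "m = 3" | "m = 4" | k where "m = k + 5" by blast
  then show ?case
  proof cases
    case 1
    have "C = {1} \<or> C = {2}" using mvc2 less.prems(1) 1 by simp
    then show ?thesis using 1 by (elim disjE) (simp_all add: numeral_2_eq_2)
  next
    case 2
    have "C = {2} \<or> C = {1,3}" using mvc3 less.prems(1) 2 by simp
    then show ?thesis using 2 by (elim disjE) (simp_all add: eval_nat_numeral)
  next
    case 3
    have "C = {1,3} \<or> C = {2,3} \<or> C = {2,4}" using mvc4 less.prems(1) 3 by simp
    then show ?thesis using 3 by (elim disjE) (simp_all add: eval_nat_numeral)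
  next
    case 4
    have a: "is_min_vertex_cover_path (k+5) C" using less.prems 4 by simp
    have fC: "finite C" using mvc_fin a by blast
    show ?thesis
    proof (cases "k+4 \<in> C")
      case True
      have "is_min_vertex_cover_path (k+3) (C - {k+4})" using drop1[of "k+3" C] a True
        by (simp add: eval_nat_numeral)
      then have "mset_set (C - {k+4}) \<in> set (rooted (k+3))" using less.IH[of "k+3"] 4 by simp
      moreover have "mset_set C = {#k+4#} + mset_set (C - {k+4})"
        using fC True by (metis add_mset_add_single add.commute mset_set.remove)
      ultimately show ?thesis unfolding 4 rooted_step by auto
    next
      case False
      then have b: "k+5 \<in> C \<and> k+3 \<in> C" using not_mid[of "k+3" C] a by (simp add: eval_nat_numeral)
      have "is_min_vertex_cover_path (k+2) (C - {k+3,k+5})" using drop2[of "k+2" C] a b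
        by (simp add: eval_nat_numeral)
      then have "mset_set (C - {k+3,k+5}) \<in> set (rooted (k+2))" using less.IH[of "k+2"] 4 by simp
      moreover have "mset_set C = {#k+5, k+3#} + mset_set (C - {k+3,k+5})"
      proof -
        have "C = insert (k+5) (insert (k+3) (C - {k+3,k+5}))" using b by auto
        then have "mset_set C = mset_set (insert (k+5) (insert (k+3) (C - {k+3,k+5})))" by simp
        also have "\<dots> = {#k+5, k+3#} + mset_set (C - {k+3,k+5})" using fC by simp
        finally show ?thesis .
      qed
      ultimately show ?thesis unfolding 4 rooted_step by auto
    qed
  qed
qed

lemma F_elems: "U \<in> F_sq m \<Longrightarrow> x \<in># U \<Longrightarrow> x \<le> m"
proof -
  assume "U \<in> F_sq m" "x \<in># U"
  then obtain C1 C2 where c: "is_min_vertex_cover_path m C1" "is_min_vertex_cover_path m C2"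
    "U = mset_set C1 + mset_set C2" unfolding F_sq_def G_cover_def by blast
  then have "x \<in> C1 \<or> x \<in> C2" using \<open>x \<in># U\<close> mvc_fin[OF c(1)] mvc_fin[OF c(2)] by auto
  then show "x \<le> m" using mvc_sub[OF c(1)] mvc_sub[OF c(2)] by auto
qed

lemma expr_ne:
  assumes "U \<in> F_sq m" "2 \<le> m"
  shows "expressions m U \<noteq> {}"
proof -
  obtain C1 C2 where c: "is_min_vertex_cover_path m C1" "is_min_vertex_cover_path m C2"
    "U = mset_set C1 + mset_set C2" using assms(1) unfolding F_sq_def G_cover_def by blast
  let ?R = "rooted m" let ?q = "length ?R"
  obtain i where i: "i < ?q" "?R ! i = mset_set C1" using mvc_rooted[OF c(1) assms(2)] by (metis in_set_conv_nth)
  obtain j where j: "j < ?q" "?R ! j = mset_set C2" using mvc_rooted[OF c(2) assms(2)] by (metis in_set_conv_nth)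
  define f where "f k = (if k = i then 1 else 0) + (if k = j then 1 else (0::nat))" for k
  define a where "a = map f [0..<?q]"
  have "length a = ?q" unfolding a_def by simp
  moreover have "sum_list a = 2"
  proof -
    have "sum_list a = sum f {0..<?q}" unfolding a_def by (metis sum_set_upt_conv_sum_list_nat set_upt)
    also have "\<dots> = (\<Sum>k\<in>{0..<?q}. if k = i then 1 else 0) + (\<Sum>k\<in>{0..<?q}. if k = j then 1 else 0)"
      unfolding f_def by (simp add: sum.distrib)
    also have "\<dots> = 2" using i j by simp
    finally show ?thesis .
  qed
  moreover have "(\<Sum>k<?q. repeat_mset (a ! k) (?R ! k)) = U"
  proof -
    have "(\<Sum>k<?q. repeat_mset (a ! k) (?R ! k)) = (\<Sum>k<?q. (if k = i then ?R ! k else {#}) + (if k = j then ?R ! k else {#}))"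
      by (rule sum.cong) (auto simp: a_def f_def repeat_mset_distrib)
    also have "\<dots> = ?R ! i + ?R ! j" using i j by (simp add: sum.distrib)
    finally show ?thesis using i j c by simp
  qed
  ultimately show ?thesis unfolding expressions_def by blast
qed

lemma mset_add2:
  assumes "is_min_vertex_cover_path j C"
  shows "mset_set (insert (j+1) (insert (j+3) C)) = {#j+3, j+1#} + mset_set C"
proof -
  have f: "finite C" using mvc_fin[OF assms] .
  have "j+1 \<notin> C" "j+3 \<notin> C" using mvc_sub[OF assms] by auto
  then show ?thesis using f by simp
qed

lemma F_shift: "U \<in> F_sq (k+2) \<longleftrightarrow> {#k+5, k+5, k+3, k+3#} + U \<in> F_sq (k+5)"
proof
  assume "U \<in> F_sq (k+2)"
  then obtain C1 C2 where c: "is_min_vertex_cover_path (k+2) C1" "is_min_vertex_cover_path (k+2) C2"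
    "U = mset_set C1 + mset_set C2" unfolding F_sq_def G_cover_def by blast
  have a1: "is_min_vertex_cover_path (k+5) (insert (k+3) (insert (k+5) C1))"
    using add2[OF c(1)] by (simp add: eval_nat_numeral)
  have a2: "is_min_vertex_cover_path (k+5) (insert (k+3) (insert (k+5) C2))"
    using add2[OF c(2)] by (simp add: eval_nat_numeral)
  have m1: "mset_set (insert (k+3) (insert (k+5) C1)) = {#k+5, k+3#} + mset_set C1"
    using mset_add2[OF c(1)] by (simp add: eval_nat_numeral)
  have m2: "mset_set (insert (k+3) (insert (k+5) C2)) = {#k+5, k+3#} + mset_set C2"
    using mset_add2[OF c(2)] by (simp add: eval_nat_numeral)
  have "{#k+5, k+5, k+3, k+3#} + U = mset_set (insert (k+3) (insert (k+5) C1)) + mset_set (insert (k+3) (insert (k+5) C2))"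
    unfolding m1 m2 c(3) by simp
  then show "{#k+5, k+5, k+3, k+3#} + U \<in> F_sq (k+5)"
    unfolding F_sq_def G_cover_def using a1 a2 by blast
next
  assume "{#k+5, k+5, k+3, k+3#} + U \<in> F_sq (k+5)"
  then obtain A B where c: "is_min_vertex_cover_path (k+5) A" "is_min_vertex_cover_path (k+5) B"
    and e: "{#k+5, k+5, k+3, k+3#} + U = mset_set A + mset_set B" unfolding F_sq_def G_cover_def by blast
  have cnt: "count (mset_set A) x + count (mset_set B) x \<ge> 2" if "x = k+5 \<or> x = k+3" for x
  proof -
    have "count ({#k+5, k+5, k+3, k+3#} + U) x \<ge> 2" using that by auto
    then have "count (mset_set A + mset_set B) x \<ge> 2" by (simp only: e)
    then show ?thesis by simp
  qed
  have inA: "x \<in> A \<and> x \<in> B" if "x = k+5 \<or> x = k+3" for x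
    using cnt[OF that] by (auto simp: count_mset_set' split: if_splits)
  have dA: "is_min_vertex_cover_path (k+2) (A - {k+3,k+5})"
    using drop2[of "k+2" A] c(1) inA by (simp add: eval_nat_numeral)
  have dB: "is_min_vertex_cover_path (k+2) (B - {k+3,k+5})"
    using drop2[of "k+2" B] c(2) inA by (simp add: eval_nat_numeral)
  have A: "A = insert (k+3) (insert (k+5) (A - {k+3,k+5}))" using inA by auto
  have B: "B = insert (k+3) (insert (k+5) (B - {k+3,k+5}))" using inA by auto
  have mA: "mset_set A = {#k+5, k+3#} + mset_set (A - {k+3,k+5})"
    using mset_add2[OF dA] A by (simp add: eval_nat_numeral)
  have mB: "mset_set B = {#k+5, k+3#} + mset_set (B - {k+3,k+5})"
    using mset_add2[OF dB] B by (simp add: eval_nat_numeral)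
  have "{#k+5, k+5, k+3, k+3#} + U = {#k+5, k+5, k+3, k+3#} + (mset_set (A - {k+3,k+5}) + mset_set (B - {k+3,k+5}))"
    using e unfolding mA mB by simp
  then have "U = mset_set (A - {k+3,k+5}) + mset_set (B - {k+3,k+5})" by simp
  then show "U \<in> F_sq (k+2)" unfolding F_sq_def G_cover_def using dA dB by blast
qed

lemma expr_shift:
  assumes U: "U \<in> F_sq (k+2)"
  shows "expressions (k+5) ({#k+5, k+5, k+3, k+3#} + U) =
         (\<lambda>b. replicate (length (rooted (k+3))) 0 @ b) ` expressions (k+2) U"
  (is "?L = ?f ` ?E")
proof -
  let ?R1 = "rooted (k+3)" let ?R2 = "rooted (k+2)" let ?r = "length ?R1"
  let ?X = "{#k+5, k+5, k+3, k+3#}"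
  have R: "rooted (k+5) = map (\<lambda>u. {#k + 4#} + u) ?R1 @ map (\<lambda>v. {#k + 5, k + 3#} + v) ?R2"
    by (rule rooted_step)
  have ev_split: "ev (rooted (k+5)) (a1 @ a2) = repeat_mset (sum_list a1) {#k+4#} + ev ?R1 a1 +
        (repeat_mset (sum_list a2) {#k + 5, k + 3#} + ev ?R2 a2)"
    if "length a1 = ?r" "length a2 = length ?R2" for a1 a2
    unfolding R using that by (simp add: ev_append ev_map)
  have cU: "count U (k+4) = 0" using F_elems[OF U, of "k+4"] by (auto simp: count_eq_zero_iff)
  show ?thesis
  proof
    show "?L \<subseteq> ?f ` ?E"
    proof
      fix a assume "a \<in> ?L"
      then have la: "length a = ?r + length ?R2" and sa: "sum_list a = 2"
        and ea: "ev (rooted (k+5)) a = ?X + U"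
        unfolding expressions_ev R by auto
      define a1 where "a1 = take ?r a" define a2 where "a2 = drop ?r a"
      have a: "a = a1 @ a2" unfolding a1_def a2_def by simp
      have l1: "length a1 = ?r" and l2: "length a2 = length ?R2" using la unfolding a1_def a2_def by auto
      have e2: "repeat_mset (sum_list a1) {#k+4#} + ev ?R1 a1 +
        (repeat_mset (sum_list a2) {#k + 5, k + 3#} + ev ?R2 a2) = ?X + U"
        using ea ev_split[OF l1 l2] a by simp
      have "count (?X + U) (k+4) = 0" using cU by simp
      then have "count (repeat_mset (sum_list a1) {#k+4#}) (k+4) = 0" unfolding e2[symmetric] by simp
      then have s1: "sum_list a1 = 0" by simp
      then have z: "a1 = replicate ?r 0" using l1 replicate_length_same[of a1 0] by simp
      have s2: "sum_list a2 = 2" using sa s1 a by simp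
      have "ev ?R1 a1 = {#}" using z ev_zero by simp
      then have "repeat_mset 2 {#k + 5, k + 3#} + ev ?R2 a2 = ?X + U" using e2 s1 s2 by simp
      then have "ev ?R2 a2 = U" by (simp add: numeral_2_eq_2)
      then have "a2 \<in> ?E" unfolding expressions_ev using l2 s2 by simp
      then show "a \<in> ?f ` ?E" using a z by blast
    qed
  next
    show "?f ` ?E \<subseteq> ?L"
    proof
      fix a assume "a \<in> ?f ` ?E"
      then obtain b where b: "b \<in> ?E" "a = ?f b" by blast
      then have lb: "length b = length ?R2" and sb: "sum_list b = 2" and eb: "ev ?R2 b = U"
        unfolding expressions_ev by auto
      have "ev (rooted (k+5)) a = ?X + U"
        using ev_split[OF _ lb, of "replicate ?r 0"] b(2) sb eb ev_zero by (simp add: numeral_2_eq_2)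
      then show "a \<in> ?L" unfolding expressions_ev R using b(2) lb sb by simp
    qed
  qed
qed

lemma max_shift:
  assumes U: "U \<in> F_sq (k+2)"
  shows "max_expr (k+5) ({#k+5, k+5, k+3, k+3#} + U) =
         replicate (length (rooted (k+3))) 0 @ max_expr (k+2) U"
proof -
  let ?f = "\<lambda>b. replicate (length (rooted (k+3))) 0 @ b"
  let ?E = "expressions (k+2) U"
  define P where "P E a \<longleftrightarrow> a \<in> E \<and> (\<forall>b\<in>E. b = a \<or> lex_less b a)" for E a
  have "\<exists>!a. P ?E a" unfolding P_def
    by (rule max_uniq, rule max_ex[OF expr_finite expr_ne[OF U]]) simp
  then have P0: "P ?E (max_expr (k+2) U)" unfolding max_expr_def P_def[symmetric] by (rule theI')
  have P1: "P (?f ` ?E) (?f (max_expr (k+2) U))"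
    using P0 unfolding P_def by (auto simp: lex_pref)
  then have "\<exists>!a. P (?f ` ?E) a" unfolding P_def by (intro max_uniq) blast
  then have "(THE a. P (?f ` ?E) a) = ?f (max_expr (k+2) U)" using P1 by (rule the1_equality)
  then show ?thesis unfolding max_expr_def expr_shift[OF U] P_def by simp
qed

theorem lemma3p4:
  fixes n :: nat and U V :: monomial
  assumes "n \<ge> 5"
  shows "(U \<in> F_sq (n - 3) \<and> V \<in> F_sq (n - 3) \<longleftrightarrow>
            {#n, n, n - 2, n - 2#} + U \<in> F_sq n \<and> {#n, n, n - 2, n - 2#} + V \<in> F_sq n)
       \<and> (U \<in> F_sq (n - 3) \<and> V \<in> F_sq (n - 3) \<longrightarrow>
            (rooted_gt (n - 3) U V \<longleftrightarrow>
             rooted_gt n ({#n, n, n - 2, n - 2#} + U) ({#n, n, n - 2, n - 2#} + V)))"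
proof -
  obtain k where n: "n = k + 5" using assms by (metis add.commute le_Suc_ex)
  have e1: "n - 3 = k + 2" "n - 2 = k + 3" using n by auto
  have part1: "U \<in> F_sq (k+2) \<and> V \<in> F_sq (k+2) \<longleftrightarrow>
     {#k+5, k+5, k+3, k+3#} + U \<in> F_sq (k+5) \<and> {#k+5, k+5, k+3, k+3#} + V \<in> F_sq (k+5)"
    using F_shift by blast
  have part2: "rooted_gt (k+2) U V \<longleftrightarrow>
     rooted_gt (k+5) ({#k+5, k+5, k+3, k+3#} + U) ({#k+5, k+5, k+3, k+3#} + V)"
    if U: "U \<in> F_sq (k+2)" and V: "V \<in> F_sq (k+2)"
    unfolding rooted_gt_def max_shift[OF U] max_shift[OF V] lex_pref
    using U V F_shift by blast
  show ?thesis unfolding e1 using part1 part2 unfolding n by blast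
qed

end
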